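(* Let $d\ge1$, $0<c\le\infty$, $X=(0,c)$, $X_{\mathrm{SYM}}=(-c,0)\cup(0,c)$, $\mathbb{X}=(X_{\mathrm{SYM}})^d$. For $i=1,\dots,d$ let $w_i\in C^2(X)$ be strictly positive, $p_i\in C^2(X)$ real-valued and nonvanishing, $q_i\in C^1(X)$ real-valued, $a_i\ge0$ constants, $A=\sum_ia_i$, $\mu_i(dx)=w_i(x)dx$ on $X$, $\delta_i=p_i\frac{d}{dx}+q_i$, $\delta_i^*=-p_i\frac{d}{dx}+q_i-p_i\frac{w_i'}{w_i}-p_i'$, $L_i=a_i+\delta_i^*\delta_i$. Assume for each $i$ there is an orthonormal basis $\{\varphi^{(i)}_k:k\in\mathbb{N}\}$ of $L^2(X,\mu_i)$ with $\varphi^{(i)}_k\in C^\infty(X)$, $L_i\varphi^{(i)}_k=\lambda^{(i)}_k\varphi^{(i)}_k$, $\lambda^{(i)}_0<\lambda^{(i)}_1<\dots\to\infty$, $\delta_i\varphi^{(i)}_k\in L^2(X,\mu_i)$ and $\langle\delta_i\varphi^{(i)}_k,\delta_i\varphi^{(i)}_m\rangle_{\mu_i}=\langle\delta_i^*\delta_i\varphi^{(i)}_k,\varphi^{(i)}_m\rangle_{\mu_i}$ for all $k,m$; assume moreover $a_i=\lambda^{(i)}_0$ for every $i$. Extend $w_i,p_i,\varphi^{(i)}_k$ evenly and $q_i$ oddly to $X_{\mathrm{SYM}}$ (and $\delta_i$ accordingly), and let $\mu(dx)=w_1(x_1)\cdots w_d(x_d)dx$ on $\mathbb{X}$. Define $$\Phi^{(i)}_{n}=\tfrac1{\sqrt2}\varphi^{(i)}_{n/2}\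 (n\text{ even}),\qquad \Phi^{(i)}_{n}=-\tfrac1{\sqrt2}\big(\lambda^{(i)}_{(n+1)/2}-a_i\big)^{-1/2}\delta_i\varphi^{(i)}_{(n+1)/2}\ (n\text{ odd}),$$ $\Phi_n=\Phi^{(1)}_{n_1}\otimes\cdots\otimes\Phi^{(d)}_{n_d}$ for $n\in\mathbb{N}^d$, and let $D_j$, $\mathbb{L}$ be $$D_jf(x)=p_j(x_j)\partial_{x_j}f(x)+q_j(x_j)\tfrac{f(x)+f(\sigma_jx)}{2}+\Big[p_j(x_j)\tfrac{w_j'(x_j)}{w_j(x_j)}+p_j'(x_j)-q_j(x_j)\Big]\tfrac{f(x)-f(\sigma_jx)}{2},\qquad \mathbb{L}=A-\sum_{i=1}^dD_i^2,$$ with $\sigma_j$ the reflection changing the sign of the $j$th coordinate. Then for all $n\in\mathbb{N}^d$, $$\mathbb{L}\Phi_n=\Big(\lambda^{(1)}_{\lfloor\frac{n_1+1}2\rfloor}+\dots+\lambda^{(d)}_{\lfloor\frac{n_d+1}2\rfloor}\Big)\Phi_n.$$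
   Context: $\mathbb{N}=\{0,1,2,\dots\}$; $\lfloor\cdot\rfloor$ is the floor function. *)

theory Defs
  imports "HOL-Analysis.Analysis"
begin

definition halfX :: "ereal \<Rightarrow> real set" where
  "halfX c = {x. 0 < x \<and> ereal x < c}"

definition symX :: "ereal \<Rightarrow> real set" where
  "symX c = {x. x \<noteq> 0 \<and> ereal \<bar>x\<bar> < c}"

definition Ck_on :: "nat \<Rightarrow> real set \<Rightarrow> (real \<Rightarrow> real) \<Rightarrow> bool" where
  "Ck_on k S f \<longleftrightarrow> (\<forall>m<k. \<forall>x\<in>S. ((deriv ^^ m) f) differentiable (at x))
      \<and> continuous_on S ((deriv ^^ k) f)"

definition Cinf_on :: "real set \<Rightarrow> (real \<Rightarrow> real) \<Rightarrow> bool" where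
  "Cinf_on S f \<longleftrightarrow> (\<forall>k. Ck_on k S f)"

definition wmeasure :: "real set \<Rightarrow> (real \<Rightarrow> real) \<Rightarrow> real measure" where
  "wmeasure S w = density (restrict_space lborel S) (\<lambda>x. ennreal (w x))"

definition inL2 :: "real measure \<Rightarrow> (real \<Rightarrow> real) \<Rightarrow> bool" where
  "inL2 M f \<longleftrightarrow> f \<in> borel_measurable M \<and> integrable M (\<lambda>x. (f x)\<^sup>2)"

definition inner_L2 :: "real measure \<Rightarrow> (real \<Rightarrow> real) \<Rightarrow> (real \<Rightarrow> real) \<Rightarrow> real" where
  "inner_L2 M f g = (LINT x|M. f x * g x)"

definition ONB_L2 :: "real measure \<Rightarrow> (nat \<Rightarrow> real \<Rightarrow> real) \<Rightarrow> bool" where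
  "ONB_L2 M \<phi> \<longleftrightarrow> (\<forall>k. inL2 M (\<phi> k))
     \<and> (\<forall>k m. inner_L2 M (\<phi> k) (\<phi> m) = (if k = m then 1 else 0))
     \<and> (\<forall>f. inL2 M f \<longrightarrow> (\<forall>k. inner_L2 M f (\<phi> k) = 0) \<longrightarrow> (AE x in M. f x = 0))"

text \<open>\<delta> = p d/dx + q and its formal adjoint w.r.t. w(x)dx.\<close>
definition delta :: "(real \<Rightarrow> real) \<Rightarrow> (real \<Rightarrow> real) \<Rightarrow> (real \<Rightarrow> real) \<Rightarrow> real \<Rightarrow> real" where
  "delta p q f x = p x * deriv f x + q x * f x"

definition delta_adj :: "(real \<Rightarrow> real) \<Rightarrow> (real \<Rightarrow> real) \<Rightarrow> (real \<Rightarrow> real)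
     \<Rightarrow> (real \<Rightarrow> real) \<Rightarrow> real \<Rightarrow> real" where
  "delta_adj w p q f x = - p x * deriv f x + q x * f x
      - p x * (deriv w x / w x) * f x - deriv p x * f x"

definition even_ext :: "(real \<Rightarrow> real) \<Rightarrow> real \<Rightarrow> real" where
  "even_ext f x = f \<bar>x\<bar>"

definition odd_ext :: "(real \<Rightarrow> real) \<Rightarrow> real \<Rightarrow> real" where
  "odd_ext f x = sgn x * f \<bar>x\<bar>"

definition Phi1 :: "(real \<Rightarrow> real) \<Rightarrow> (real \<Rightarrow> real) \<Rightarrow> (nat \<Rightarrow> real \<Rightarrow> real)
     \<Rightarrow> (nat \<Rightarrow> real) \<Rightarrow> real \<Rightarrow> nat \<Rightarrow> real \<Rightarrow> real" where
  "Phi1 p q \<phi> lam a n x =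
     (if even n then (1 / sqrt 2) * even_ext (\<phi> (n div 2)) x
      else - (1 / sqrt 2) * (1 / sqrt (lam ((n + 1) div 2) - a))
             * delta (even_ext p) (odd_ext q) (even_ext (\<phi> ((n + 1) div 2))) x)"

definition PhiT :: "('d::finite \<Rightarrow> real \<Rightarrow> real) \<Rightarrow> ('d \<Rightarrow> real \<Rightarrow> real)
     \<Rightarrow> ('d \<Rightarrow> nat \<Rightarrow> real \<Rightarrow> real) \<Rightarrow> ('d \<Rightarrow> nat \<Rightarrow> real) \<Rightarrow> ('d \<Rightarrow> real)
     \<Rightarrow> nat^'d \<Rightarrow> real^'d \<Rightarrow> real" where
  "PhiT p q \<phi> lam a n x = (\<Prod>i\<in>UNIV. Phi1 (p i) (q i) (\<phi> i) (lam i) (a i) (n $ i) (x $ i))"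

definition refl :: "'d::finite \<Rightarrow> real^'d \<Rightarrow> real^'d" where
  "refl j x = (\<chi> k. if k = j then - (x $ k) else x $ k)"

definition upd :: "real^'d \<Rightarrow> 'd::finite \<Rightarrow> real \<Rightarrow> real^'d" where
  "upd x j t = (\<chi> k. if k = j then t else x $ k)"

definition pderiv_at :: "'d::finite \<Rightarrow> (real^'d \<Rightarrow> real) \<Rightarrow> real^'d \<Rightarrow> real" where
  "pderiv_at j f x = deriv (\<lambda>t. f (upd x j t)) (x $ j)"

definition Dop :: "('d::finite \<Rightarrow> real \<Rightarrow> real) \<Rightarrow> ('d \<Rightarrow> real \<Rightarrow> real) \<Rightarrow> ('d \<Rightarrow> real \<Rightarrow> real)
     \<Rightarrow> 'd \<Rightarrow> (real^'d \<Rightarrow> real) \<Rightarrow> real^'d \<Rightarrow> real" where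
  "Dop w p q j f x =
     (let pe = even_ext (p j); we = even_ext (w j); qo = odd_ext (q j); y = x $ j in
      pe y * pderiv_at j f x
      + qo y * ((f x + f (refl j x)) / 2)
      + (pe y * (deriv we y / we y) + deriv pe y - qo y) * ((f x - f (refl j x)) / 2))"

definition Lop :: "('d::finite \<Rightarrow> real \<Rightarrow> real) \<Rightarrow> ('d \<Rightarrow> real \<Rightarrow> real) \<Rightarrow> ('d \<Rightarrow> real \<Rightarrow> real)
     \<Rightarrow> real \<Rightarrow> (real^'d \<Rightarrow> real) \<Rightarrow> real^'d \<Rightarrow> real" where
  "Lop w p q A f x = A * f x - (\<Sum>i\<in>UNIV. Dop w p q i (Dop w p q i f) x)"

end

theory Submission
  imports Defs
begin


lemma open_symX: "open (symX c)"
proof -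
  have "symX c = {x. x \<noteq> 0} \<inter> {x. ereal \<bar>x\<bar> < c}" by (auto simp: symX_def)
  moreover have "open {x::real. x \<noteq> 0}" by (simp add: open_Collect_neq)
  moreover have "open {x::real. ereal \<bar>x\<bar> < c}"
    by (intro open_Collect_less continuous_intros)
  ultimately show ?thesis by auto
qed

lemma symX_abs: "y \<in> symX c \<longleftrightarrow> \<bar>y\<bar> \<in> halfX c"
  by (auto simp: symX_def halfX_def)

lemma symX_neg: "y \<in> symX c \<Longrightarrow> - y \<in> symX c"
  by (auto simp: symX_def)

lemma even_deriv:
  assumes "y \<noteq> 0" "(g has_real_derivative D) (at \<bar>y\<bar>)"
  shows "((\<lambda>t. g \<bar>t\<bar>) has_real_derivative sgn y * D) (at y)"
proof (cases "y > 0")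
  case True
  have "(g has_real_derivative sgn y * D) (at y)" using assms True by simp
  then show ?thesis
    by (rule has_field_derivative_transform_within_open[where S="{0<..}"]) (use True in auto)
next
  case False
  then have y: "y < 0" using assms by auto
  have "((\<lambda>t. g (- t)) has_real_derivative - D) (at y)"
    using assms y DERIV_mirror[where f=g and x=y and y=D] by simp
  then have "((\<lambda>t. g (- t)) has_real_derivative sgn y * D) (at y)" using y by simp
  then show ?thesis
    by (rule has_field_derivative_transform_within_open[where S="{..<0}"]) (use y in auto)
qed

lemma odd_deriv:
  assumes "y \<noteq> 0" "(g has_real_derivative D) (at \<bar>y\<bar>)"
  shows "((\<lambda>t. sgn t * g \<bar>t\<bar>) has_real_derivative D) (at y)"
proof (cases "y > 0")
  case True
  have "(g has_real_derivative D) (at y)" using assms True by simp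
  then show ?thesis
    by (rule has_field_derivative_transform_within_open[where S="{0<..}"]) (use True in auto)
next
  case False
  then have y: "y < 0" using assms by auto
  have "((\<lambda>t. g (- t)) has_real_derivative - D) (at y)"
    using assms y DERIV_mirror[where f=g and x=y and y=D] by simp
  then have "((\<lambda>t. - g (- t)) has_real_derivative D) (at y)"
    using DERIV_minus by fastforce
  then show ?thesis
    by (rule has_field_derivative_transform_within_open[where S="{..<0}"]) (use y in auto)
qed


definition D1 :: "(real \<Rightarrow> real) \<Rightarrow> (real \<Rightarrow> real) \<Rightarrow> (real \<Rightarrow> real) \<Rightarrow> (real \<Rightarrow> real) \<Rightarrow> real \<Rightarrow> real" where
  "D1 W P Q v y = even_ext P y * deriv v y + odd_ext Q y * ((v y + v (- y)) / 2)
     + (even_ext P y * (deriv (even_ext W) y / even_ext W y) + deriv (even_ext P) y - odd_ext Q y)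
       * ((v y - v (- y)) / 2)"

lemma Dop_rep:
  fixes f :: "real^'d::finite \<Rightarrow> real"
  assumes xj: "x$j \<in> symX c" and rep: "\<forall>t\<in>symX c. f (upd x j t) = K * v t"
    and dv: "(v has_real_derivative D) (at (x$j))"
  shows "Dop w p q j f x = K * D1 (w j) (p j) (q j) v (x$j)"
proof -
  have upd_self: "upd x j (x$j) = x" by (simp add: upd_def vec_eq_iff)
  have refl_eq: "refl j x = upd x j (-(x$j))" by (simp add: refl_def upd_def vec_eq_iff)
  have "((\<lambda>t. K * v t) has_real_derivative K*D) (at (x$j))" by (intro DERIV_cmult dv)
  hence "((\<lambda>t. f (upd x j t)) has_real_derivative K*D) (at (x$j))"
    by (rule has_field_derivative_transform_within_open[where S="symX c"]) (use open_symX xj rep in auto)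
  hence pd: "pderiv_at j f x = K * D" by (simp add: pderiv_at_def DERIV_imp_deriv)
  have dd: "deriv v (x$j) = D" using dv by (rule DERIV_imp_deriv)
  have fx: "f x = K * v (x$j)" using rep xj upd_self by metis
  have fr: "f (refl j x) = K * v (-(x$j))" using rep symX_neg[OF xj] refl_eq by metis
  have alg: "\<And>A B C d u u'. A*(K*d) + B*((K*u+K*u')/2) + C*((K*u - K*u')/2) = K*(A*d + B*((u+u')/2) + C*((u-u')/2))"
    by (simp add: field_simps)
  show ?thesis unfolding Dop_def D1_def Let_def pd fx fr dd by (rule alg)
qed

lemma Ck2: "Ck_on 2 S f \<Longrightarrow> y \<in> S \<Longrightarrow> f differentiable (at y) \<and> deriv f differentiable (at y)"
proof -
  assume "Ck_on 2 S f" "y \<in> S"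
  then have H: "\<forall>m<2. \<forall>x\<in>S. (deriv^^m) f differentiable (at x)" "y \<in> S" by (auto simp: Ck_on_def)
  then have "(deriv^^0) f differentiable (at y)" "(deriv^^1) f differentiable (at y)"
    using H(1)[rule_format, of 0 y] H(1)[rule_format, of 1 y] by auto
  then show ?thesis by simp
qed

lemma Ck1: "Ck_on 1 S f \<Longrightarrow> y \<in> S \<Longrightarrow> f differentiable (at y)"
proof -
  assume "Ck_on 1 S f" "y \<in> S"
  then have "(deriv^^0) f differentiable (at y)"
    by (auto simp: Ck_on_def)
  then show ?thesis by simp
qed

lemma one_dim:
  fixes w p q :: "real \<Rightarrow> real" and \<phi> :: "nat \<Rightarrow> real \<Rightarrow> real" and lamf :: "nat \<Rightarrow> real"
  assumes kdef: "k = (n + 1) div 2"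
    and diffs: "\<And>y. y \<in> halfX c \<Longrightarrow> \<phi> k differentiable (at y) \<and> deriv (\<phi> k) differentiable (at y)
        \<and> p differentiable (at y) \<and> q differentiable (at y) \<and> w differentiable (at y)"
    and eig: "\<And>y. y \<in> halfX c \<Longrightarrow> a * \<phi> k y + delta_adj w p q (delta p q (\<phi> k)) y = lamf k * \<phi> k y"
  shows "\<exists>\<kappa> r1 r2 u1 u2. r1 * r2 = a - lamf k
     \<and> (\<forall>t\<in>symX c. Phi1 p q \<phi> lamf a n t = \<kappa> * u1 t)
     \<and> (\<forall>t\<in>symX c. \<exists>D. (u1 has_real_derivative D) (at t))
     \<and> (\<forall>t\<in>symX c. \<exists>D. (u2 has_real_derivative D) (at t))
     \<and> (\<forall>t\<in>symX c. D1 w p q u1 t = r1 * u2 t)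
     \<and> (\<forall>t\<in>symX c. D1 w p q u2 t = r2 * u1 t)"
proof -
  define g where "g = delta p q (\<phi> k)"
  define E where "E = even_ext (\<phi> k)"
  define Od where "Od = odd_ext g"
  have Eeq: "E = (\<lambda>t. \<phi> k \<bar>t\<bar>)" by (simp add: E_def even_ext_def[abs_def])
  have Oeq: "Od = (\<lambda>t. sgn t * g \<bar>t\<bar>)" by (simp add: Od_def odd_ext_def[abs_def])
  have weq: "even_ext w = (\<lambda>t. w \<bar>t\<bar>)" "even_ext p = (\<lambda>t. p \<bar>t\<bar>)" by (simp_all add: even_ext_def[abs_def])
  have ddiff: "(f has_real_derivative deriv f y) (at y)" if "f differentiable (at y)" for f :: "real \<Rightarrow> real" and y
    using that by (simp add: DERIV_deriv_iff_real_differentiable)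
  have gdiff: "g differentiable (at y)" if "y \<in> halfX c" for y
    using diffs[OF that] unfolding g_def delta_def[abs_def]
    by (intro differentiable_add differentiable_mult) auto
  have t0: "t \<noteq> 0" if "t \<in> symX c" for t using that by (simp add: symX_def)
  have dE: "(E has_real_derivative sgn t * deriv (\<phi> k) \<bar>t\<bar>) (at t)" if "t \<in> symX c" for t
    unfolding Eeq using t0[OF that] ddiff diffs that symX_abs by (intro even_deriv) auto
  have dO: "(Od has_real_derivative deriv g \<bar>t\<bar>) (at t)" if "t \<in> symX c" for t
    unfolding Oeq using t0[OF that] ddiff gdiff that symX_abs by (intro odd_deriv) auto
  have dW: "(even_ext w has_real_derivative sgn t * deriv w \<bar>t\<bar>) (at t)" if "t \<in> symX c" for t
    unfolding weq using t0[OF that] ddiff diffs that symX_abs by (intro even_deriv) auto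
  have dP: "(even_ext p has_real_derivative sgn t * deriv p \<bar>t\<bar>) (at t)" if "t \<in> symX c" for t
    unfolding weq using t0[OF that] ddiff diffs that symX_abs by (intro even_deriv) auto
  have sq: "sgn t * sgn t = (1::real)" if "t \<in> symX c" for t
    using t0[OF that] by (simp add: sgn_if)
  have DE: "D1 w p q E t = Od t" if "t \<in> symX c" for t
    using DERIV_imp_deriv[OF dE[OF that]]
    by (simp add: D1_def Eeq Oeq g_def delta_def even_ext_def odd_ext_def algebra_simps)
  have DO: "D1 w p q Od t = (a - lamf k) * E t" if "t \<in> symX c" for t
  proof -
    have e: "a * \<phi> k \<bar>t\<bar> + delta_adj w p q g \<bar>t\<bar> = lamf k * \<phi> k \<bar>t\<bar>"
      using eig that symX_abs g_def by auto
    have "D1 w p q Od t = p \<bar>t\<bar> * deriv g \<bar>t\<bar> + (sgn t * sgn t) * ((p \<bar>t\<bar> * (deriv w \<bar>t\<bar> / w \<bar>t\<bar>) + deriv p \<bar>t\<bar> - q \<bar>t\<bar>) * g \<bar>t\<bar>)"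
      using DERIV_imp_deriv[OF dO[OF that]] DERIV_imp_deriv[OF dW[OF that]] DERIV_imp_deriv[OF dP[OF that]]
      by (simp add: D1_def Oeq even_ext_def odd_ext_def algebra_simps)
    also have "\<dots> = - delta_adj w p q g \<bar>t\<bar>"
      using sq[OF that] by (simp add: delta_adj_def algebra_simps)
    also have "\<dots> = (a - lamf k) * E t" using e by (simp add: Eeq algebra_simps)
    finally show ?thesis .
  qed
  show ?thesis
  proof (cases "even n")
    case True
    then have nk: "n div 2 = k" using kdef by presburger
    show ?thesis
      apply (rule exI[of _ "1 / sqrt 2"], rule exI[of _ 1], rule exI[of _ "a - lamf k"],
             rule exI[of _ E], rule exI[of _ Od])
      using True nk dE dO DE DO by (auto simp: Phi1_def E_def)
  next
    case False
    have Peq: "Phi1 p q \<phi> lamf a n t = (- (1 / sqrt 2) * (1 / sqrt (lamf k - a))) * Od t"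
      if "t \<in> symX c" for t
    proof -
      have nk: "(n+1) div 2 = k" using kdef by simp
      have dk: "deriv (even_ext (\<phi> k)) t = sgn t * deriv (\<phi> k) \<bar>t\<bar>"
        using DERIV_imp_deriv[OF dE[OF that]] by (simp add: E_def)
      show ?thesis using False
        unfolding Phi1_def nk apply (simp add: delta_def dk Oeq g_def)
        by (simp add: even_ext_def odd_ext_def algebra_simps)
    qed
    show ?thesis
      apply (rule exI[of _ "- (1 / sqrt 2) * (1 / sqrt (lamf k - a))"], rule exI[of _ "a - lamf k"],
             rule exI[of _ 1], rule exI[of _ Od], rule exI[of _ E])
      using Peq dE dO DE DO by auto
  qed
qed


theorem mainTheorem3:
  fixes c :: ereal
    and w p q :: "'d::finite \<Rightarrow> real \<Rightarrow> real"
    and a :: "'d \<Rightarrow> real"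
    and \<phi> :: "'d \<Rightarrow> nat \<Rightarrow> real \<Rightarrow> real"
    and lam :: "'d \<Rightarrow> nat \<Rightarrow> real"
    and n :: "nat^'d"
  assumes c_pos: "0 < c"
    and w_pos: "\<And>i x. x \<in> halfX c \<Longrightarrow> w i x > 0"
    and w_C2: "\<And>i. Ck_on 2 (halfX c) (w i)"
    and p_C2: "\<And>i. Ck_on 2 (halfX c) (p i)"
    and p_nz: "\<And>i x. x \<in> halfX c \<Longrightarrow> p i x \<noteq> 0"
    and q_C1: "\<And>i. Ck_on 1 (halfX c) (q i)"
    and a_nonneg: "\<And>i. a i \<ge> 0"
    and onb: "\<And>i. ONB_L2 (wmeasure (halfX c) (w i)) (\<phi> i)"
    and phi_smooth: "\<And>i k. Cinf_on (halfX c) (\<phi> i k)"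
    and eigen: "\<And>i k x. x \<in> halfX c \<Longrightarrow>
        a i * \<phi> i k x + delta_adj (w i) (p i) (q i) (delta (p i) (q i) (\<phi> i k)) x
          = lam i k * \<phi> i k x"
    and lam_mono: "\<And>i. strict_mono (lam i)"
    and lam_inf: "\<And>i. filterlim (lam i) at_top sequentially"
    and delta_L2: "\<And>i k. inL2 (wmeasure (halfX c) (w i)) (delta (p i) (q i) (\<phi> i k))"
    and ibp: "\<And>i k m. inner_L2 (wmeasure (halfX c) (w i))
                 (delta (p i) (q i) (\<phi> i k)) (delta (p i) (q i) (\<phi> i m))
               = inner_L2 (wmeasure (halfX c) (w i))
                 (delta_adj (w i) (p i) (q i) (delta (p i) (q i) (\<phi> i k))) (\<phi> i m)"
    and a_eq: "\<And>i. a i = lam i 0"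
  shows "\<forall>x. (\<forall>i. x $ i \<in> symX c) \<longrightarrow>
     Lop w p q (\<Sum>i\<in>UNIV. a i) (PhiT p q \<phi> lam a n) x
       = (\<Sum>i\<in>UNIV. lam i ((n $ i + 1) div 2)) * PhiT p q \<phi> lam a n x"
  proof (intro allI impI)
  fix x :: "real^'d"
  assume hx: "\<forall>i. x $ i \<in> symX c"
  define f where "f = PhiT p q \<phi> lam a n"
  define kk where "kk i = (n $ i + 1) div 2" for i
  have key: "Dop w p q j (Dop w p q j f) x = (a j - lam j (kk j)) * f x" for j
  proof -
    have phiC2: "Ck_on 2 (halfX c) (\<phi> j (kk j))" using phi_smooth[of j "kk j"] by (simp add: Cinf_on_def)
    have diffs: "\<phi> j (kk j) differentiable (at y) \<and> deriv (\<phi> j (kk j)) differentiable (at y)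
        \<and> p j differentiable (at y) \<and> q j differentiable (at y) \<and> w j differentiable (at y)"
      if "y \<in> halfX c" for y
      using Ck2[OF phiC2 that]
        Ck2[OF p_C2 that] Ck2[OF w_C2 that] Ck1[OF q_C1 that] by auto
    obtain \<kappa> r1 r2 u1 u2 where r12: "r1 * r2 = a j - lam j (kk j)"
      and Pr: "\<forall>t\<in>symX c. Phi1 (p j) (q j) (\<phi> j) (lam j) (a j) (n $ j) t = \<kappa> * u1 t"
      and d1: "\<forall>t\<in>symX c. \<exists>D. (u1 has_real_derivative D) (at t)"
      and d2: "\<forall>t\<in>symX c. \<exists>D. (u2 has_real_derivative D) (at t)"
      and D1a: "\<forall>t\<in>symX c. D1 (w j) (p j) (q j) u1 t = r1 * u2 t"
      and D1b: "\<forall>t\<in>symX c. D1 (w j) (p j) (q j) u2 t = r2 * u1 t"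
      using one_dim[of "kk j" "n $ j" c "\<phi> j" "p j" "q j" "w j" "a j" "lam j", OF kk_def diffs eigen]
      by blast
    define K where "K = (\<Prod>i\<in>UNIV - {j}. Phi1 (p i) (q i) (\<phi> i) (lam i) (a i) (n $ i) (x $ i))"
    have rep0: "f (upd y j t) = K * Phi1 (p j) (q j) (\<phi> j) (lam j) (a j) (n $ j) t"
      if "\<forall>i. i \<noteq> j \<longrightarrow> y $ i = x $ i" for y t
    proof -
      have "f (upd y j t) = Phi1 (p j) (q j) (\<phi> j) (lam j) (a j) (n $ j) ((upd y j t) $ j) *
          (\<Prod>i\<in>UNIV - {j}. Phi1 (p i) (q i) (\<phi> i) (lam i) (a i) (n $ i) ((upd y j t) $ i))"
        unfolding f_def PhiT_def by (rule prod.remove) auto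
      also have "(\<Prod>i\<in>UNIV - {j}. Phi1 (p i) (q i) (\<phi> i) (lam i) (a i) (n $ i) ((upd y j t) $ i)) = K"
        unfolding K_def by (rule prod.cong) (use that in \<open>auto simp: upd_def\<close>)
      finally show ?thesis by (simp add: upd_def)
    qed
    have xj: "x $ j \<in> symX c" using hx by auto
    have step1: "\<forall>t\<in>symX c. Dop w p q j f (upd x j t) = (K * \<kappa> * r1) * u2 t"
    proof
      fix t assume t: "t \<in> symX c"
      have "Dop w p q j f (upd x j t) = (K * \<kappa>) * D1 (w j) (p j) (q j) u1 ((upd x j t) $ j)"
      proof -
        obtain D where D: "(u1 has_real_derivative D) (at t)" using d1 t by blast
        show ?thesis
          by (rule Dop_rep[where D=D]) (use t D Pr rep0 in \<open>auto simp: upd_def\<close>)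
      qed
      also have "\<dots> = (K * \<kappa> * r1) * u2 t" using D1a t by (simp add: upd_def)
      finally show "Dop w p q j f (upd x j t) = (K * \<kappa> * r1) * u2 t" .
    qed
    obtain D where D: "(u2 has_real_derivative D) (at (x $ j))" using d2 xj by blast
    have "Dop w p q j (Dop w p q j f) x = (K * \<kappa> * r1) * D1 (w j) (p j) (q j) u2 (x $ j)"
      by (rule Dop_rep[OF xj step1 D])
    also have "\<dots> = (r1 * r2) * (K * (\<kappa> * u1 (x $ j)))" using D1b xj by simp
    also have "K * (\<kappa> * u1 (x $ j)) = f x"
    proof -
      have "upd x j (x $ j) = x" by (simp add: upd_def vec_eq_iff)
      then show ?thesis using rep0[of x "x $ j"] Pr xj by simp
    qed
    finally show ?thesis using r12 by simp
  qed
  have "Lop w p q (\<Sum>i\<in>UNIV. a i) f x = (\<Sum>i\<in>UNIV. a i) * f x - (\<Sum>i\<in>UNIV. (a i - lam i (kk i)) * f x)"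
    unfolding Lop_def using key by simp
  also have "\<dots> = (\<Sum>i\<in>UNIV. lam i (kk i)) * f x"
    by (simp add: sum_distrib_right sum_distrib_left sum_subtractf algebra_simps)
  finally show "Lop w p q (\<Sum>i\<in>UNIV. a i) (PhiT p q \<phi> lam a n) x
       = (\<Sum>i\<in>UNIV. lam i ((n $ i + 1) div 2)) * PhiT p q \<phi> lam a n x"
    by (simp add: f_def kk_def)
qed

end
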